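(* Let $D$ be a square-free integer, let $\mathbb{Z}[\sqrt{D}]$ denote the ring of integers of $\mathbb{Q}(\sqrt{D})$, let $p$ be a prime integer which is irreducible but not prime in $\mathbb{Z}[\sqrt{D}]$, let $z\in I_p(D)$ and $k=\lVert z\rVert/p$. Then $A(p,z)$ has property (CZ) if and only if the following holds, according to the case: Case 1 ($D\equiv 1\pmod 4$ and $z=\frac{z_1+z_2\sqrt{D}}{2}$ with $z_1,z_2$ odd integers): there exist integers $b_1,b_2$ such that the numbers $a_1=\frac{4p-z_1b_1+z_2b_2D}{2p}$, $a_2=\frac{z_2b_1-z_1b_2}{2p}$, $c_1=\frac{-(z_1^2+z_2^2D)b_1+2z_1z_2Db_2+4z_1p}{4p^2}$, $c_2=\frac{2z_1z_2b_1-(z_1^2+z_2^2D)b_2-4z_2p}{4p^2}$ are integers, $0=(p+k)b_1^2-(p+k)Db_2^2-2z_1b_1+2z_2b_2D+4p-4p^2$, and the elements $\frac{a_1+a_2\sqrt D}{2},\frac{b_1+b_2\sqrt D}{2},\frac{c_1+c_2\sqrt D}{2}$ lie in $\mathbb{Z}[\sqrt D]$; Case 2 ($D\equiv 1\pmod 4$ and $z=z_1+z_2\sqrt{D}$ with $z_1,z_2\in\mathbb{Z}$): there exist integers $b_1,b_2$ such that the numbers $a_1=\frac{2p-z_1b_1+z_2b_2D}{p}$, $a_2=\frac{z_2b_1-z_1b_2}{p}$, $c_1=\frac{-(z_1^2+z_2^2D)b_1+2z_1z_2Db_2+2z_1p}{p^2}$, $c_2=\frac{2z_1z_2b_1-(z_1^2+z_2^2D)b_2-2z_2p}{p^2}$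 are integers, $0=(p+k)b_1^2-(p+k)Db_2^2-4z_1b_1+4z_2b_2D+4p-4p^2$, and the elements $\frac{a_1+a_2\sqrt D}{2},\frac{b_1+b_2\sqrt D}{2},\frac{c_1+c_2\sqrt D}{2}$ lie in $\mathbb{Z}[\sqrt D]$; Case 3 ($D\equiv 2,3\pmod 4$ and $z=z_1+z_2\sqrt{D}$ with $z_1,z_2\in\mathbb{Z}$): there exist integers $b_1,b_2$ such that the numbers $a_1=\frac{p-z_1b_1+z_2b_2D}{p}$, $a_2=\frac{z_2b_1-z_1b_2}{p}$, $c_1=\frac{-(z_1^2+z_2^2D)b_1+2z_1z_2Db_2+z_1p}{p^2}$, $c_2=\frac{2z_1z_2b_1-(z_1^2+z_2^2D)b_2-z_2p}{p^2}$ are integers and $0=(p+k)b_1^2-(p+k)Db_2^2-2z_1b_1+2z_2Db_2+p-p^2$.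
   Context: $\mathbb{Z}[\sqrt{D}]=\{a+b\sqrt{D}:a,b\in\mathbb{Z}\}$ if $D\equiv 2,3 \pmod 4$ and $\{\frac{a+b\sqrt{D}}{2}:a,b\in\mathbb{Z},a\equiv b \pmod 2\}$ if $D\equiv 1\pmod 4$. $\bar z$ denotes the conjugate and $\lVert z\rVert=z\bar z$ the norm. $I_p(D)$ is the set of all non-unit $z\in\mathbb{Z}[\sqrt{D}]$ such that $z\notin\langle p\rangle$ but there exists $m\notin\langle p\rangle$ with $zm\in\langle p\rangle$ (for such $z$, $p$ divides $\lVert z\rVert$). $A(p,z)=\begin{pmatrix} p & z\\ \bar z & \lVert z\rVert/p\end{pmatrix}$. A matrix $A(p,z)$ has property (CZ) if there exist $a,b,c\in\mathbb{Z}[\sqrt{D}]$ with $a(1-a)=bc$ such that $A(p,z)=\begin{pmatrix} a&b\\ c&1-a\end{pmatrix}\begin{pmatrix}\bar a&\bar c\\ \bar b&1-\bar a\end{pmatrix}$. *)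

theory Defs
  imports Complex_Main "HOL-Computational_Algebra.Squarefree"
begin

text \<open>Elements of Q(sqrt D) are represented by their coordinates: the pair (x, y) of
  rationals stands for x + y * sqrt D.  Since D is square-free and D \<noteq> 1, sqrt D is
  irrational, so these coordinates are unique.\<close>

type_synonym qd = "rat \<times> rat"

definition qadd :: "qd \<Rightarrow> qd \<Rightarrow> qd" where
  "qadd z w = (fst z + fst w, snd z + snd w)"

definition qsub :: "qd \<Rightarrow> qd \<Rightarrow> qd" where
  "qsub z w = (fst z - fst w, snd z - snd w)"

definition qmul :: "int \<Rightarrow> qd \<Rightarrow> qd \<Rightarrow> qd" where
  "qmul D z w = (fst z * fst w + of_int D * snd z * snd w, fst z * snd w + snd z * fst w)"

definition qone :: qd where "qone = (1, 0)"

definition qof_int :: "int \<Rightarrow> qd" where "qof_int n = (of_int n, 0)"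

definition qcnj :: "qd \<Rightarrow> qd" where "qcnj z = (fst z, - snd z)"

definition qnorm :: "int \<Rightarrow> qd \<Rightarrow> rat" where
  "qnorm D z = fst z ^ 2 - of_int D * snd z ^ 2"

definition ZD :: "int \<Rightarrow> qd set" where
  "ZD D = (if D mod 4 = 1
           then {z. \<exists>a b :: int. even (a - b) \<and> z = (of_int a / 2, of_int b / 2)}
           else {z. \<exists>a b :: int. z = (of_int a, of_int b)})"

definition qunit :: "int \<Rightarrow> qd \<Rightarrow> bool" where
  "qunit D z \<longleftrightarrow> z \<in> ZD D \<and> (\<exists>w \<in> ZD D. qmul D z w = qone)"

definition qdvd :: "int \<Rightarrow> qd \<Rightarrow> qd \<Rightarrow> bool" where
  "qdvd D x y \<longleftrightarrow> (\<exists>m \<in> ZD D. y = qmul D x m)"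

definition pideal :: "int \<Rightarrow> qd \<Rightarrow> qd set" where
  "pideal D x = {qmul D x m | m. m \<in> ZD D}"

definition irreducible_ZD :: "int \<Rightarrow> qd \<Rightarrow> bool" where
  "irreducible_ZD D x \<longleftrightarrow> x \<in> ZD D \<and> x \<noteq> (0, 0) \<and> \<not> qunit D x \<and>
     (\<forall>u \<in> ZD D. \<forall>v \<in> ZD D. x = qmul D u v \<longrightarrow> qunit D u \<or> qunit D v)"

definition prime_ZD :: "int \<Rightarrow> qd \<Rightarrow> bool" where
  "prime_ZD D x \<longleftrightarrow> x \<in> ZD D \<and> x \<noteq> (0, 0) \<and> \<not> qunit D x \<and>
     (\<forall>u \<in> ZD D. \<forall>v \<in> ZD D. qdvd D x (qmul D u v) \<longrightarrow> qdvd D x u \<or> qdvd D x v)"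

definition Ip :: "int \<Rightarrow> int \<Rightarrow> qd set" where
  "Ip D p = {z \<in> ZD D. \<not> qunit D z \<and> z \<notin> pideal D (qof_int p) \<and>
      (\<exists>m \<in> ZD D. m \<notin> pideal D (qof_int p) \<and> qmul D z m \<in> pideal D (qof_int p))}"

text \<open>2x2 matrices ((a, b), (c, d)) = [[a, b], [c, d]] over Q(sqrt D) and their product.\<close>
type_synonym qmat = "(qd \<times> qd) \<times> (qd \<times> qd)"

definition mmul2 :: "int \<Rightarrow> qmat \<Rightarrow> qmat \<Rightarrow> qmat" where
  "mmul2 D M N =
    (let a = fst (fst M); b = snd (fst M); c = fst (snd M); d = snd (snd M);
         e = fst (fst N); f = snd (fst N); g = fst (snd N); h = snd (snd N)
     in ((qadd (qmul D a e) (qmul D b g), qadd (qmul D a f) (qmul D b h)),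
         (qadd (qmul D c e) (qmul D d g), qadd (qmul D c f) (qmul D d h))))"

definition Amat :: "int \<Rightarrow> int \<Rightarrow> qd \<Rightarrow> qmat" where
  "Amat D p z = ((qof_int p, z), (qcnj z, (qnorm D z / of_int p, 0)))"

definition CZ :: "int \<Rightarrow> int \<Rightarrow> qd \<Rightarrow> bool" where
  "CZ D p z \<longleftrightarrow> (\<exists>a \<in> ZD D. \<exists>b \<in> ZD D. \<exists>c \<in> ZD D.
      qmul D a (qsub qone a) = qmul D b c \<and>
      Amat D p z = mmul2 D ((a, b), (c, qsub qone a))
                           ((qcnj a, qcnj c), (qcnj b, qsub qone (qcnj a))))"

definition cond1 :: "int \<Rightarrow> int \<Rightarrow> rat \<Rightarrow> int \<Rightarrow> int \<Rightarrow> bool" where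
  "cond1 D p k z1 z2 \<longleftrightarrow> (\<exists>b1 b2 :: int.
     let P = rat_of_int p; d = rat_of_int D; x1 = rat_of_int z1; x2 = rat_of_int z2;
         y1 = rat_of_int b1; y2 = rat_of_int b2;
         a1 = (4 * P - x1 * y1 + x2 * y2 * d) / (2 * P);
         a2 = (x2 * y1 - x1 * y2) / (2 * P);
         c1 = (- (x1^2 + x2^2 * d) * y1 + 2 * x1 * x2 * d * y2 + 4 * x1 * P) / (4 * P^2);
         c2 = (2 * x1 * x2 * y1 - (x1^2 + x2^2 * d) * y2 - 4 * x2 * P) / (4 * P^2)
     in a1 \<in> \<int> \<and> a2 \<in> \<int> \<and> c1 \<in> \<int> \<and> c2 \<in> \<int> \<and>
        0 = (P + k) * y1^2 - (P + k) * d * y2^2 - 2 * x1 * y1 + 2 * x2 * y2 * d + 4 * P - 4 * P^2 \<and>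
        (a1 / 2, a2 / 2) \<in> ZD D \<and> (y1 / 2, y2 / 2) \<in> ZD D \<and> (c1 / 2, c2 / 2) \<in> ZD D)"

definition cond2 :: "int \<Rightarrow> int \<Rightarrow> rat \<Rightarrow> int \<Rightarrow> int \<Rightarrow> bool" where
  "cond2 D p k z1 z2 \<longleftrightarrow> (\<exists>b1 b2 :: int.
     let P = rat_of_int p; d = rat_of_int D; x1 = rat_of_int z1; x2 = rat_of_int z2;
         y1 = rat_of_int b1; y2 = rat_of_int b2;
         a1 = (2 * P - x1 * y1 + x2 * y2 * d) / P;
         a2 = (x2 * y1 - x1 * y2) / P;
         c1 = (- (x1^2 + x2^2 * d) * y1 + 2 * x1 * x2 * d * y2 + 2 * x1 * P) / (P^2);
         c2 = (2 * x1 * x2 * y1 - (x1^2 + x2^2 * d) * y2 - 2 * x2 * P) / (P^2)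
     in a1 \<in> \<int> \<and> a2 \<in> \<int> \<and> c1 \<in> \<int> \<and> c2 \<in> \<int> \<and>
        0 = (P + k) * y1^2 - (P + k) * d * y2^2 - 4 * x1 * y1 + 4 * x2 * y2 * d + 4 * P - 4 * P^2 \<and>
        (a1 / 2, a2 / 2) \<in> ZD D \<and> (y1 / 2, y2 / 2) \<in> ZD D \<and> (c1 / 2, c2 / 2) \<in> ZD D)"

definition cond3 :: "int \<Rightarrow> int \<Rightarrow> rat \<Rightarrow> int \<Rightarrow> int \<Rightarrow> bool" where
  "cond3 D p k z1 z2 \<longleftrightarrow> (\<exists>b1 b2 :: int.
     let P = rat_of_int p; d = rat_of_int D; x1 = rat_of_int z1; x2 = rat_of_int z2;
         y1 = rat_of_int b1; y2 = rat_of_int b2;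
         a1 = (P - x1 * y1 + x2 * y2 * d) / P;
         a2 = (x2 * y1 - x1 * y2) / P;
         c1 = (- (x1^2 + x2^2 * d) * y1 + 2 * x1 * x2 * d * y2 + x1 * P) / (P^2);
         c2 = (2 * x1 * x2 * y1 - (x1^2 + x2^2 * d) * y2 - x2 * P) / (P^2)
     in a1 \<in> \<int> \<and> a2 \<in> \<int> \<and> c1 \<in> \<int> \<and> c2 \<in> \<int> \<and>
        0 = (P + k) * y1^2 - (P + k) * d * y2^2 - 2 * x1 * y1 + 2 * x2 * d * y2 + P - P^2)"

end

theory Submission imports Defs begin

lemma fwd:
  fixes a1 a2 b1 b2 c1 c2 d P x1 x2 :: rat
  assumes "a1*(1-a1) - d*a2*a2 = b1*c1 + d*b2*c2" "a2*(1-a1) - a1*a2 = b1*c2 + b2*c1"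
   and "P = a1*a1 - d*a2*a2 + b1*b1 - d*b2*b2"
   and "x1 = a1*c1 - d*a2*c2 + b1*(1-a1) + d*b2*a2"
   and "x2 = a2*c1 - a1*c2 + b1*a2 + b2*(1-a1)"
  shows "P*a1 = P - (b1*x1 - d*b2*x2)" "P*a2 = b1*x2 - b2*x1"
    "P*c1 = a1*x1 - d*a2*x2" "P*c2 = a2*x1 - a1*x2"
  using assms by algebra+

lemma bwd:
  fixes a1 a2 b1 b2 c1 c2 d P x1 x2 K :: rat
  assumes "P*a1 = P - (b1*x1 - d*b2*x2)" "P*a2 = b1*x2 - b2*x1"
    "P*c1 = a1*x1 - d*a2*x2" "P*c2 = a2*x1 - a1*x2"
   and "P = a1*a1 - d*a2*a2 + b1*b1 - d*b2*b2" "K*P = x1*x1 - d*x2*x2"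
  shows "P*(a1*(1-a1) - d*a2*a2 - (b1*c1 + d*b2*c2)) = 0"
     "P*(a2*(1-a1) - a1*a2 - (b1*c2 + b2*c1)) = 0"
   "P*(x1 - (a1*c1 - d*a2*c2 + b1*(1-a1) + d*b2*a2)) = 0"
   "P*(x2 - (a2*c1 - a1*c2 + b1*a2 + b2*(1-a1))) = 0"
   "P*P*(K - (c1*c1 - d*c2*c2 + (1-a1)*(1-a1) - d*a2*a2)) = 0"
  using assms by algebra+

definition aof :: "int \<Rightarrow> int \<Rightarrow> qd \<Rightarrow> qd \<Rightarrow> qd" where
  "aof D p z b = (1 - (fst b * fst z - of_int D * snd b * snd z) / of_int p,
                  (fst b * snd z - snd b * fst z) / of_int p)"

definition cof :: "int \<Rightarrow> int \<Rightarrow> qd \<Rightarrow> qd \<Rightarrow> qd" where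
  "cof D p z b = ((fst (aof D p z b) * fst z - of_int D * snd (aof D p z b) * snd z) / of_int p,
                  (snd (aof D p z b) * fst z - fst (aof D p z b) * snd z) / of_int p)"

definition good :: "int \<Rightarrow> int \<Rightarrow> qd \<Rightarrow> qd \<Rightarrow> bool" where
  "good D p z b \<longleftrightarrow> aof D p z b \<in> ZD D \<and> cof D p z b \<in> ZD D \<and>
     rat_of_int p = fst (aof D p z b)^2 - of_int D * snd (aof D p z b)^2 + fst b^2 - of_int D * snd b^2"

lemma e0_comp: "qmul D (a1,a2) (qsub qone (a1,a2)) = qmul D (b1,b2) (c1,c2) \<longleftrightarrow>
   (a1*(1-a1) - of_int D*a2*a2 = b1*c1 + of_int D*b2*c2 \<and> a2*(1-a1) - a1*a2 = b1*c2 + b2*c1)"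
  by (simp add: qmul_def qsub_def qone_def algebra_simps)

lemma em_comp: "Amat D p (x1,x2) = mmul2 D (((a1,a2),(b1,b2)),((c1,c2),qsub qone (a1,a2)))
      ((qcnj (a1,a2), qcnj (c1,c2)), (qcnj (b1,b2), qsub qone (qcnj (a1,a2)))) \<longleftrightarrow>
   (of_int p = a1*a1 - of_int D*a2*a2 + b1*b1 - of_int D*b2*b2 \<and>
    x1 = a1*c1 - of_int D*a2*c2 + b1*(1-a1) + of_int D*b2*a2 \<and>
    x2 = a2*c1 - a1*c2 + b1*a2 + b2*(1-a1) \<and>
    qnorm D (x1,x2) / of_int p = c1*c1 - of_int D*c2*c2 + (1-a1)*(1-a1) - of_int D*a2*a2)"
  by (simp add: Amat_def mmul2_def qmul_def qsub_def qone_def qadd_def qcnj_def qof_int_def Let_def)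
    (auto simp: algebra_simps)
lemma CZ_iff:
  assumes p: "p \<noteq> 0"
  shows "CZ D p z \<longleftrightarrow> (\<exists>b \<in> ZD D. good D p z b)"
proof
  assume "CZ D p z"
  then obtain a b c where abc: "a \<in> ZD D" "b \<in> ZD D" "c \<in> ZD D"
    and e0: "qmul D a (qsub qone a) = qmul D b c"
    and em: "Amat D p z = mmul2 D ((a, b), (c, qsub qone a))
                           ((qcnj a, qcnj c), (qcnj b, qsub qone (qcnj a)))"
    unfolding CZ_def by blast
  obtain a1 a2 where a: "a = (a1,a2)" by fastforce
  obtain b1 b2 where b: "b = (b1,b2)" by fastforce
  obtain c1 c2 where c: "c = (c1,c2)" by fastforce
  obtain x1 x2 where z: "z = (x1,x2)" by fastforce
  define P where "P = rat_of_int p"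
  define d where "d = rat_of_int D"
  have P0: "P \<noteq> 0" using p by (simp add: P_def)
  have h1: "a1*(1-a1) - d*a2*a2 = b1*c1 + d*b2*c2" "a2*(1-a1) - a1*a2 = b1*c2 + b2*c1"
    using e0 unfolding a b c e0_comp d_def by auto
  have h2: "P = a1*a1 - d*a2*a2 + b1*b1 - d*b2*b2"
   "x1 = a1*c1 - d*a2*c2 + b1*(1-a1) + d*b2*a2"
   "x2 = a2*c1 - a1*c2 + b1*a2 + b2*(1-a1)"
    using em unfolding a b c z em_comp d_def P_def by auto
  note f = fwd[OF h1 h2]
  have ea: "aof D p z b = a"
  proof -
    have "a1 = 1 - (b1*x1 - d*b2*x2)/P" "a2 = (b1*x2 - b2*x1)/P" using f(1,2) P0
      by (simp_all add: field_simps)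
    then show ?thesis by (simp add: aof_def a b z P_def d_def)
  qed
  have "cof D p z b = c"
  proof -
    have "c1 = (a1*x1 - d*a2*x2)/P" "c2 = (a2*x1 - a1*x2)/P" using f(3,4) P0
      by (simp_all add: field_simps)
    then show ?thesis unfolding cof_def ea by (simp add: a c z P_def d_def)
  qed
  then have "good D p z b" using abc h2 ea
    by (simp add: good_def a b P_def d_def power2_eq_square)
  then show "\<exists>b \<in> ZD D. good D p z b" using abc by blast
next
  assume "\<exists>b \<in> ZD D. good D p z b"
  then obtain b where bZ: "b \<in> ZD D" and g: "good D p z b" by blast
  define a where "a = aof D p z b"
  define c where "c = cof D p z b"
  obtain a1 a2 where a: "a = (a1,a2)" by fastforce
  obtain b1 b2 where b: "b = (b1,b2)" by fastforce
  obtain c1 c2 where c: "c = (c1,c2)" by fastforce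
  obtain x1 x2 where z: "z = (x1,x2)" by fastforce
  define P where "P = rat_of_int p"
  define d where "d = rat_of_int D"
  define K where "K = qnorm D z / P"
  have P0: "P \<noteq> 0" using p by (simp add: P_def)
  have ha: "a1 = 1 - (b1*x1 - d*b2*x2)/P" "a2 = (b1*x2 - b2*x1)/P"
    using a unfolding a_def aof_def by (simp_all add: b z P_def d_def)
  have hc: "c1 = (a1*x1 - d*a2*x2)/P" "c2 = (a2*x1 - a1*x2)/P"
    using c unfolding c_def cof_def a_def[symmetric] by (simp_all add: a z P_def d_def)
  have h: "P*a1 = P - (b1*x1 - d*b2*x2)" "P*a2 = b1*x2 - b2*x1"
    "P*c1 = a1*x1 - d*a2*x2" "P*c2 = a2*x1 - a1*x2"
    using ha hc P0 by (simp_all add: field_simps)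
  have h2: "P = a1*a1 - d*a2*a2 + b1*b1 - d*b2*b2"
    using g unfolding good_def a_def[symmetric] by (simp add: a b P_def d_def power2_eq_square)
  have h3: "K*P = x1*x1 - d*x2*x2" using P0
    by (simp add: K_def qnorm_def z d_def power2_eq_square)
  note r = bwd[OF h h2 h3]
  have r1: "a1*(1-a1) - d*a2*a2 = b1*c1 + d*b2*c2" "a2*(1-a1) - a1*a2 = b1*c2 + b2*c1"
    "x1 = a1*c1 - d*a2*c2 + b1*(1-a1) + d*b2*a2" "x2 = a2*c1 - a1*c2 + b1*a2 + b2*(1-a1)"
    "K = c1*c1 - d*c2*c2 + (1-a1)*(1-a1) - d*a2*a2"
    using r P0 by auto
  have "qmul D a (qsub qone a) = qmul D b c"
    unfolding a b c e0_comp using r1 by (simp add: d_def)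
  moreover have "Amat D p z = mmul2 D ((a, b), (c, qsub qone a))
                           ((qcnj a, qcnj c), (qcnj b, qsub qone (qcnj a)))"
    unfolding a b c z em_comp using r1 h2 by (simp add: K_def z d_def P_def)
  moreover have "a \<in> ZD D" "c \<in> ZD D" using g by (simp_all add: good_def a_def c_def)
  ultimately show "CZ D p z" unfolding CZ_def using bZ by blast
qed

lemma scale_iff: "((S::rat) - P) * c = R \<Longrightarrow> c \<noteq> 0 \<Longrightarrow> (P = S) \<longleftrightarrow> (0 = R)"
  by auto

lemma ZD3: "D mod 4 \<noteq> 1 \<Longrightarrow> (u, v) \<in> ZD D \<longleftrightarrow> u \<in> \<int> \<and> v \<in> \<int>"
  by (auto simp: ZD_def elim!: Ints_cases)

lemma case3_b:
  fixes b1 b2 z1 z2 p D :: int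
  assumes p: "p \<noteq> 0" and D: "D mod 4 \<noteq> 1" and z: "z = (of_int z1, of_int z2)"
    and k: "k = qnorm D z / of_int p"
  shows "good D p z (of_int b1, of_int b2) \<longleftrightarrow>
    (let P = rat_of_int p; d = rat_of_int D; x1 = rat_of_int z1; x2 = rat_of_int z2;
         y1 = rat_of_int b1; y2 = rat_of_int b2;
         a1 = (P - x1 * y1 + x2 * y2 * d) / P;
         a2 = (x2 * y1 - x1 * y2) / P;
         c1 = (- (x1^2 + x2^2 * d) * y1 + 2 * x1 * x2 * d * y2 + x1 * P) / (P^2);
         c2 = (2 * x1 * x2 * y1 - (x1^2 + x2^2 * d) * y2 - x2 * P) / (P^2)
     in a1 \<in> \<int> \<and> a2 \<in> \<int> \<and> c1 \<in> \<int> \<and> c2 \<in> \<int> \<and>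
        0 = (P + k) * y1^2 - (P + k) * d * y2^2 - 2 * x1 * y1 + 2 * x2 * d * y2 + P - P^2)"
proof -
  define P where "P = rat_of_int p"
  define d where "d = rat_of_int D"
  define x1 where "x1 = rat_of_int z1"
  define x2 where "x2 = rat_of_int z2"
  define y1 where "y1 = rat_of_int b1"
  define y2 where "y2 = rat_of_int b2"
  have P0: "P \<noteq> 0" using p by (simp add: P_def)
  have kk: "k = (x1^2 - d*x2^2)/P" by (simp add: k z qnorm_def P_def d_def x1_def x2_def)
  define A1 where "A1 = (P - x1 * y1 + x2 * y2 * d) / P"
  define A2 where "A2 = (x2 * y1 - x1 * y2) / P"
  define C1 where "C1 = (- (x1^2 + x2^2 * d) * y1 + 2 * x1 * x2 * d * y2 + x1 * P) / (P^2)"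
  define C2 where "C2 = (2 * x1 * x2 * y1 - (x1^2 + x2^2 * d) * y2 - x2 * P) / (P^2)"
  have ae: "aof D p z (y1, y2) = (A1, A2)"
    unfolding aof_def A1_def A2_def using P0
    by (simp add: z P_def[symmetric] d_def[symmetric] x1_def[symmetric] x2_def[symmetric]) (simp add: field_simps)
  have ce: "cof D p z (y1, y2) = (C1, C2)"
    unfolding cof_def ae A1_def A2_def C1_def C2_def using P0
    by (simp add: z P_def[symmetric] d_def[symmetric] x1_def[symmetric] x2_def[symmetric]) (simp add: field_simps power2_eq_square)
  have Q: "(P = A1^2 - d*A2^2 + y1^2 - d*y2^2) \<longleftrightarrow>
     (0 = (P + k) * y1^2 - (P + k) * d * y2^2 - 2 * x1 * y1 + 2 * x2 * d * y2 + P - P^2)"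
  proof -
    have "(A1^2 - d*A2^2 + y1^2 - d*y2^2 - P) * P =
      (P + k) * y1^2 - (P + k) * d * y2^2 - 2 * x1 * y1 + 2 * x2 * d * y2 + P - P^2"
      unfolding A1_def A2_def kk using P0 by (simp add: field_simps power2_eq_square)
    then show ?thesis by (rule scale_iff) (use P0 in simp)
  qed
  have g: "good D p z (y1, y2) \<longleftrightarrow> A1 \<in> \<int> \<and> A2 \<in> \<int> \<and> C1 \<in> \<int> \<and> C2 \<in> \<int> \<and>
     P = A1^2 - d*A2^2 + y1^2 - d*y2^2"
    unfolding good_def ae ce using D by (simp add: ZD3 P_def d_def)
  show ?thesis unfolding Let_def P_def[symmetric] d_def[symmetric] x1_def[symmetric] x2_def[symmetric]
    y1_def[symmetric] y2_def[symmetric] A1_def[symmetric] A2_def[symmetric] C1_def[symmetric] C2_def[symmetric]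
    g Q by blast
qed

lemma ZDh: "D mod 4 = 1 \<Longrightarrow> (u / 2, v / 2) \<in> ZD D \<Longrightarrow> u \<in> \<int> \<and> (v::rat) \<in> \<int>"
  by (auto simp: ZD_def)

lemma case1_b:
  fixes b1 b2 z1 z2 p D :: int
  assumes p: "p \<noteq> 0" and D: "D mod 4 = 1" and z: "z = (of_int z1 / 2, of_int z2 / 2)"
    and k: "k = qnorm D z / of_int p"
  shows "((of_int b1 / 2, of_int b2 / 2) \<in> ZD D \<and> good D p z (of_int b1 / 2, of_int b2 / 2)) \<longleftrightarrow>
    (let P = rat_of_int p; d = rat_of_int D; x1 = rat_of_int z1; x2 = rat_of_int z2;
         y1 = rat_of_int b1; y2 = rat_of_int b2;
         a1 = (4 * P - x1 * y1 + x2 * y2 * d) / (2 * P);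
         a2 = (x2 * y1 - x1 * y2) / (2 * P);
         c1 = (- (x1^2 + x2^2 * d) * y1 + 2 * x1 * x2 * d * y2 + 4 * x1 * P) / (4 * P^2);
         c2 = (2 * x1 * x2 * y1 - (x1^2 + x2^2 * d) * y2 - 4 * x2 * P) / (4 * P^2)
     in a1 \<in> \<int> \<and> a2 \<in> \<int> \<and> c1 \<in> \<int> \<and> c2 \<in> \<int> \<and>
        0 = (P + k) * y1^2 - (P + k) * d * y2^2 - 2 * x1 * y1 + 2 * x2 * y2 * d + 4 * P - 4 * P^2 \<and>
        (a1 / 2, a2 / 2) \<in> ZD D \<and> (y1 / 2, y2 / 2) \<in> ZD D \<and> (c1 / 2, c2 / 2) \<in> ZD D)"
proof -
  define P where "P = rat_of_int p"
  define d where "d = rat_of_int D"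
  define x1 where "x1 = rat_of_int z1"
  define x2 where "x2 = rat_of_int z2"
  define y1 where "y1 = rat_of_int b1"
  define y2 where "y2 = rat_of_int b2"
  have P0: "P \<noteq> 0" using p by (simp add: P_def)
  have kk: "k = (x1^2 - d*x2^2)/(4*P)" by (simp add: k z qnorm_def P_def d_def x1_def x2_def field_simps)
  define A1 where "A1 = (4 * P - x1 * y1 + x2 * y2 * d) / (2 * P)"
  define A2 where "A2 = (x2 * y1 - x1 * y2) / (2 * P)"
  define C1 where "C1 = (- (x1^2 + x2^2 * d) * y1 + 2 * x1 * x2 * d * y2 + 4 * x1 * P) / (4 * P^2)"
  define C2 where "C2 = (2 * x1 * x2 * y1 - (x1^2 + x2^2 * d) * y2 - 4 * x2 * P) / (4 * P^2)"
  have ae: "aof D p z (y1/2, y2/2) = (A1/2, A2/2)"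
    unfolding aof_def A1_def A2_def using P0
    by (simp add: z P_def[symmetric] d_def[symmetric] x1_def[symmetric] x2_def[symmetric]) (simp add: field_simps)
  have ce: "cof D p z (y1/2, y2/2) = (C1/2, C2/2)"
    unfolding cof_def ae A1_def A2_def C1_def C2_def using P0
    by (simp add: z P_def[symmetric] d_def[symmetric] x1_def[symmetric] x2_def[symmetric]) (simp add: field_simps power2_eq_square)
  have Q: "(P = (A1/2)^2 - d*(A2/2)^2 + (y1/2)^2 - d*(y2/2)^2) \<longleftrightarrow>
     (0 = (P + k) * y1^2 - (P + k) * d * y2^2 - 2 * x1 * y1 + 2 * x2 * y2 * d + 4 * P - 4 * P^2)"
  proof -
    have "((A1/2)^2 - d*(A2/2)^2 + (y1/2)^2 - d*(y2/2)^2 - P) * (4*P) =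
      (P + k) * y1^2 - (P + k) * d * y2^2 - 2 * x1 * y1 + 2 * x2 * y2 * d + 4 * P - 4 * P^2"
      unfolding A1_def A2_def kk using P0 by (simp add: field_simps power2_eq_square)
    then show ?thesis by (rule scale_iff) (use P0 in simp)
  qed
  have g: "good D p z (y1/2, y2/2) \<longleftrightarrow> (A1/2, A2/2) \<in> ZD D \<and> (C1/2, C2/2) \<in> ZD D \<and>
     P = (A1/2)^2 - d*(A2/2)^2 + (y1/2)^2 - d*(y2/2)^2"
    unfolding good_def ae ce by (simp add: P_def d_def)
  show ?thesis unfolding Let_def P_def[symmetric] d_def[symmetric] x1_def[symmetric] x2_def[symmetric]
    y1_def[symmetric] y2_def[symmetric] A1_def[symmetric] A2_def[symmetric] C1_def[symmetric] C2_def[symmetric]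
    g Q using ZDh[OF D, of A1 A2] ZDh[OF D, of C1 C2] by blast
qed

lemma case2_b:
  fixes b1 b2 z1 z2 p D :: int
  assumes p: "p \<noteq> 0" and D: "D mod 4 = 1" and z: "z = (of_int z1, of_int z2)"
    and k: "k = qnorm D z / of_int p"
  shows "((of_int b1 / 2, of_int b2 / 2) \<in> ZD D \<and> good D p z (of_int b1 / 2, of_int b2 / 2)) \<longleftrightarrow>
    (let P = rat_of_int p; d = rat_of_int D; x1 = rat_of_int z1; x2 = rat_of_int z2;
         y1 = rat_of_int b1; y2 = rat_of_int b2;
         a1 = (2 * P - x1 * y1 + x2 * y2 * d) / P;
         a2 = (x2 * y1 - x1 * y2) / P;
         c1 = (- (x1^2 + x2^2 * d) * y1 + 2 * x1 * x2 * d * y2 + 2 * x1 * P) / (P^2);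
         c2 = (2 * x1 * x2 * y1 - (x1^2 + x2^2 * d) * y2 - 2 * x2 * P) / (P^2)
     in a1 \<in> \<int> \<and> a2 \<in> \<int> \<and> c1 \<in> \<int> \<and> c2 \<in> \<int> \<and>
        0 = (P + k) * y1^2 - (P + k) * d * y2^2 - 4 * x1 * y1 + 4 * x2 * y2 * d + 4 * P - 4 * P^2 \<and>
        (a1 / 2, a2 / 2) \<in> ZD D \<and> (y1 / 2, y2 / 2) \<in> ZD D \<and> (c1 / 2, c2 / 2) \<in> ZD D)"
proof -
  define P where "P = rat_of_int p"
  define d where "d = rat_of_int D"
  define x1 where "x1 = rat_of_int z1"
  define x2 where "x2 = rat_of_int z2"
  define y1 where "y1 = rat_of_int b1"
  define y2 where "y2 = rat_of_int b2"
  have P0: "P \<noteq> 0" using p by (simp add: P_def)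
  have kk: "k = (x1^2 - d*x2^2)/P" by (simp add: k z qnorm_def P_def d_def x1_def x2_def)
  define A1 where "A1 = (2 * P - x1 * y1 + x2 * y2 * d) / P"
  define A2 where "A2 = (x2 * y1 - x1 * y2) / P"
  define C1 where "C1 = (- (x1^2 + x2^2 * d) * y1 + 2 * x1 * x2 * d * y2 + 2 * x1 * P) / (P^2)"
  define C2 where "C2 = (2 * x1 * x2 * y1 - (x1^2 + x2^2 * d) * y2 - 2 * x2 * P) / (P^2)"
  have ae: "aof D p z (y1/2, y2/2) = (A1/2, A2/2)"
    unfolding aof_def A1_def A2_def using P0
    by (simp add: z P_def[symmetric] d_def[symmetric] x1_def[symmetric] x2_def[symmetric]) (simp add: field_simps)
  have ce: "cof D p z (y1/2, y2/2) = (C1/2, C2/2)"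
    unfolding cof_def ae A1_def A2_def C1_def C2_def using P0
    by (simp add: z P_def[symmetric] d_def[symmetric] x1_def[symmetric] x2_def[symmetric]) (simp add: field_simps power2_eq_square)
  have Q: "(P = (A1/2)^2 - d*(A2/2)^2 + (y1/2)^2 - d*(y2/2)^2) \<longleftrightarrow>
     (0 = (P + k) * y1^2 - (P + k) * d * y2^2 - 4 * x1 * y1 + 4 * x2 * y2 * d + 4 * P - 4 * P^2)"
  proof -
    have "((A1/2)^2 - d*(A2/2)^2 + (y1/2)^2 - d*(y2/2)^2 - P) * (4*P) =
      (P + k) * y1^2 - (P + k) * d * y2^2 - 4 * x1 * y1 + 4 * x2 * y2 * d + 4 * P - 4 * P^2"
      unfolding A1_def A2_def kk using P0 by (simp add: field_simps power2_eq_square)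
    then show ?thesis by (rule scale_iff) (use P0 in simp)
  qed
  have g: "good D p z (y1/2, y2/2) \<longleftrightarrow> (A1/2, A2/2) \<in> ZD D \<and> (C1/2, C2/2) \<in> ZD D \<and>
     P = (A1/2)^2 - d*(A2/2)^2 + (y1/2)^2 - d*(y2/2)^2"
    unfolding good_def ae ce by (simp add: P_def d_def)
  show ?thesis unfolding Let_def P_def[symmetric] d_def[symmetric] x1_def[symmetric] x2_def[symmetric]
    y1_def[symmetric] y2_def[symmetric] A1_def[symmetric] A2_def[symmetric] C1_def[symmetric] C2_def[symmetric]
    g Q using ZDh[OF D, of A1 A2] ZDh[OF D, of C1 C2] by blast
qed

lemma ex_ZD_half: "D mod 4 = 1 \<Longrightarrow> (\<exists>b \<in> ZD D. Pr b) \<longleftrightarrow>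
   (\<exists>b1 b2 :: int. (of_int b1 / 2, of_int b2 / 2) \<in> ZD D \<and> Pr (of_int b1 / 2, of_int b2 / 2))"
  by (smt (verit, del_insts) ZD_def mem_Collect_eq)

lemma ex_ZD_int: "D mod 4 \<noteq> 1 \<Longrightarrow> (\<exists>b \<in> ZD D. Pr b) \<longleftrightarrow>
   (\<exists>b1 b2 :: int. Pr (of_int b1, of_int b2))"
  by (auto simp: ZD_def)

theorem theorem3p2:
  fixes D p :: int and z :: qd
  assumes "squarefree D" and "D \<noteq> 1"
    and "prime p"
    and "irreducible_ZD D (qof_int p)" and "\<not> prime_ZD D (qof_int p)"
    and "z \<in> Ip D p"
  defines "k \<equiv> qnorm D z / of_int p"
  shows "(\<forall>z1 z2 :: int. D mod 4 = 1 \<and> odd z1 \<and> odd z2 \<and>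
              z = (of_int z1 / 2, of_int z2 / 2) \<longrightarrow> (CZ D p z \<longleftrightarrow> cond1 D p k z1 z2))
       \<and> (\<forall>z1 z2 :: int. D mod 4 = 1 \<and> z = (of_int z1, of_int z2)
              \<longrightarrow> (CZ D p z \<longleftrightarrow> cond2 D p k z1 z2))
       \<and> (\<forall>z1 z2 :: int. (D mod 4 = 2 \<or> D mod 4 = 3) \<and> z = (of_int z1, of_int z2)
              \<longrightarrow> (CZ D p z \<longleftrightarrow> cond3 D p k z1 z2))"
proof -
  have p: "p \<noteq> 0" using assms(3) by auto
  have kk: "k = qnorm D z / of_int p" by (simp add: k_def)
  show ?thesis
  proof (intro conjI allI impI)
    fix z1 z2 :: int
    assume h: "D mod 4 = 1 \<and> odd z1 \<and> odd z2 \<and> z = (of_int z1 / 2, of_int z2 / 2)"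
    show "CZ D p z \<longleftrightarrow> cond1 D p k z1 z2"
      unfolding CZ_iff[OF p] ex_ZD_half[of D, OF conjunct1[OF h]] cond1_def
      using case1_b[OF p conjunct1[OF h] _ kk] h by presburger
  next
    fix z1 z2 :: int
    assume h: "D mod 4 = 1 \<and> z = (of_int z1, of_int z2)"
    show "CZ D p z \<longleftrightarrow> cond2 D p k z1 z2"
      unfolding CZ_iff[OF p] ex_ZD_half[of D, OF conjunct1[OF h]] cond2_def
      using case2_b[OF p conjunct1[OF h] _ kk] h by presburger
  next
    fix z1 z2 :: int
    assume h: "(D mod 4 = 2 \<or> D mod 4 = 3) \<and> z = (of_int z1, of_int z2)"
    then have D: "D mod 4 \<noteq> 1" by auto
    show "CZ D p z \<longleftrightarrow> cond3 D p k z1 z2"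
      unfolding CZ_iff[OF p] ex_ZD_int[OF D] cond3_def
      using case3_b[OF p D _ kk] h by presburger
  qed
qed

end
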